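(* Let $G=(V,E)$ be a finite graph and $x_e\in(0,1)$ for each $e\in E$. Let $\Omega=\{0,1\}^E$, $\Sigma\subset\Omega$, $f:\Omega\to2^\Sigma$, $f(\omega)=\Sigma^\downarrow(\omega):=\{\eta\in\Sigma\mid\eta\subset\omega\}$, and $\rho[\omega]\propto\mathbb{P}_x[\omega]$ ($\omega\in\Omega$), $\gamma[\eta]\propto1$ ($\eta\in\Sigma$). Let $\mathscr{P}$ be the probability measure on $\Omega\times\Sigma$ with $\mathscr{P}[\omega,\eta]\propto\rho[\omega]\gamma[\eta]\mathbf{1}[\eta\in f(\omega)]$. Then: (a) The marginal $\mathscr{P}_\Sigma$ on $\Sigma$ satisfies $\mathscr{P}_\Sigma[\eta]\propto\prod_{e\in\eta}x_e$. For each $\omega$ with $\mathscr{P}_\Omega[\omega]\neq0$, $\mathscr{P}[\cdot\mid\omega]$ is the uniform measure on $\Sigma^\downarrow(\omega)$. (b) The marginal on $\Omega$ is $\mathscr{P}_\Omega=\mathscr{P}_\Sigma\cup\mathbb{P}_x$. For each $\eta\in\Sigma$ with $\mathscr{P}_\Sigma[\eta]\neq0$, $\mathscr{P}[\cdot\mid\eta]=\mathbb{P}_x\cup\delta_\eta$.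
   Context: Elements of $\{0,1\}^E$ are identified with subsets of $E$. $\mathbb{P}_x$ is Bernoulli percolation with edge $e$ open independently with probability $x_e$; $\delta_\eta$ is the Dirac mass at $\eta$; for measures $\pi,\nu$ on $\{0,1\}^E$, $\pi\cup\nu$ is the law of the union of independent samples of $\pi$ and $\nu$. *)

theory Defs
  imports "HOL-Probability.Probability"
begin

definition perc :: "'e set \<Rightarrow> ('e \<Rightarrow> real) \<Rightarrow> 'e set pmf" where
  "perc E x = map_pmf (\<lambda>b. {e \<in> E. b e}) (Pi_pmf E False (\<lambda>e. bernoulli_pmf (x e)))"

definition union_pmf :: "'e set pmf \<Rightarrow> 'e set pmf \<Rightarrow> 'e set pmf" where
  "union_pmf \<pi> \<nu> = map_pmf (\<lambda>(a, b). a \<union> b) (pair_pmf \<pi> \<nu>)"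

definition down :: "'e set set \<Rightarrow> 'e set \<Rightarrow> 'e set set" where
  "down \<Sigma> \<omega> = {\<eta> \<in> \<Sigma>. \<eta> \<subseteq> \<omega>}"

definition joint :: "'e set \<Rightarrow> ('e \<Rightarrow> real) \<Rightarrow> 'e set set \<Rightarrow> ('e set \<times> 'e set) pmf" where
  "joint E x \<Sigma> = cond_pmf (pair_pmf (perc E x) (pmf_of_set \<Sigma>)) {(\<omega>, \<eta>). \<eta> \<in> down \<Sigma> \<omega>}"

end

theory Submission imports Defs begin

definition Qf :: "'e set \<Rightarrow> ('e \<Rightarrow> real) \<Rightarrow> 'e set \<Rightarrow> 'e set \<Rightarrow> real" where
  "Qf E x \<eta> \<omega> = (if \<omega> \<subseteq> E then (\<Prod>e\<in>E. if e \<in> \<eta> then (if e \<in> \<omega> then 1 else 0)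
       else if e \<in> \<omega> then x e else 1 - x e) else 0)"

lemma map_pair_bind:
  "map_pmf f (pair_pmf M N) = bind_pmf M (\<lambda>a. map_pmf (\<lambda>b. f (a, b)) N)"
  by (simp add: pair_pmf_def map_pmf_def bind_assoc_pmf bind_return_pmf)

lemma prob_finite_supp:
  assumes "set_pmf p \<subseteq> F" "finite F"
  shows "measure_pmf.prob p B = sum (pmf p) (B \<inter> F)"
proof -
  have "measure_pmf.prob p B = measure_pmf.prob p (B \<inter> set_pmf p)" by (simp add: measure_Int_set_pmf)
  also have "B \<inter> set_pmf p = (B \<inter> F) \<inter> set_pmf p" using assms by auto
  also have "measure_pmf.prob p \<dots> = measure_pmf.prob p (B \<inter> F)" by (simp add: measure_Int_set_pmf)
  also have "\<dots> = sum (pmf p) (B \<inter> F)" using assms by (simp add: measure_measure_pmf_finite)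
  finally show ?thesis .
qed

lemma set_perc: "finite E \<Longrightarrow> set_pmf (perc E x) \<subseteq> Pow E"
  unfolding perc_def by auto

lemma perc_event:
  assumes fin: "finite E" and "\<eta> \<subseteq> E" and x: "\<forall>e\<in>E. 0 \<le> x e \<and> x e \<le> 1"
  shows "measure_pmf.prob (perc E x) {b. b \<union> \<eta> = \<omega>} = Qf E x \<eta> \<omega>"
proof -
  let ?Pi = "Pi_pmf E False (\<lambda>e. bernoulli_pmf (x e))"
  let ?S = "(\<lambda>b. {e\<in>E. b e}) -` {b. b \<union> \<eta> = \<omega>}"
  have "measure_pmf.prob (perc E x) {b. b \<union> \<eta> = \<omega>} = measure_pmf.prob ?Pi ?S"
    unfolding perc_def by simp
  also have "\<dots> = measure_pmf.prob ?Pi (?S \<inter> set_pmf ?Pi)" by (simp add: measure_Int_set_pmf)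
  finally have eq: "measure_pmf.prob (perc E x) {b. b \<union> \<eta> = \<omega>} = measure_pmf.prob ?Pi (?S \<inter> set_pmf ?Pi)" .
  show ?thesis
  proof (cases "\<omega> \<subseteq> E")
    case False
    then have "?S = {}" using assms by auto
    then show ?thesis using eq False by (simp add: Qf_def)
  next
    case True
    define B where "B = (\<lambda>e. if e\<in>\<eta> then (if e\<in>\<omega> then UNIV else {}) else (if e\<in>\<omega> then {True} else {False}))"
    have sub: "set_pmf ?Pi \<subseteq> {f. \<forall>y. y \<notin> E \<longrightarrow> f y = False}" by (rule set_Pi_pmf_subset[OF fin])
    have "?S \<inter> set_pmf ?Pi = PiE_dflt E False B \<inter> set_pmf ?Pi"
    proof (intro equalityI subsetI)
      fix b assume b: "b \<in> ?S \<inter> set_pmf ?Pi"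
      then have out: "\<forall>y. y \<notin> E \<longrightarrow> b y = False" using sub by blast
      from b have "{e\<in>E. b e} \<union> \<eta> = \<omega>" by auto
      then show "b \<in> PiE_dflt E False B \<inter> set_pmf ?Pi" using b out
        unfolding PiE_dflt_def B_def by (auto simp: set_eq_iff)
    next
      fix b assume b: "b \<in> PiE_dflt E False B \<inter> set_pmf ?Pi"
      then have out: "\<forall>y. y \<notin> E \<longrightarrow> b y = False" using sub by blast
      have "{e\<in>E. b e} \<union> \<eta> = \<omega>"
      proof (intro equalityI subsetI)
        fix e assume "e \<in> {e\<in>E. b e} \<union> \<eta>"
        then show "e \<in> \<omega>" using b assms unfolding PiE_dflt_def B_def
          by (auto split: if_splits)
      next
        fix e assume "e \<in> \<omega>"
        then show "e \<in> {e\<in>E. b e} \<union> \<eta>" using b True unfolding PiE_dflt_def B_def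
          by (auto split: if_splits)
      qed
      then show "b \<in> ?S \<inter> set_pmf ?Pi" using b by auto
    qed
    then have "measure_pmf.prob (perc E x) {b. b \<union> \<eta> = \<omega>} = measure_pmf.prob ?Pi (PiE_dflt E False B)"
      using eq by (simp add: measure_Int_set_pmf)
    also have "\<dots> = (\<Prod>e\<in>E. measure_pmf.prob (bernoulli_pmf (x e)) (B e))"
      by (rule measure_Pi_pmf_PiE_dflt[OF fin])
    also have "\<dots> = Qf E x \<eta> \<omega>" unfolding Qf_def using True
      by (simp only: if_True, intro prod.cong refl) (auto simp: B_def measure_pmf_single x)
    finally show ?thesis .
  qed
qed

lemma perc_pmf:
  assumes "finite E" and "\<forall>e\<in>E. 0 \<le> x e \<and> x e \<le> 1"
  shows "pmf (perc E x) \<omega> = Qf E x {} \<omega>"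
  using perc_event[OF assms(1) _ assms(2), of "{}" \<omega>] by (simp add: measure_pmf_single[symmetric])

lemma perc_up:
  assumes fin: "finite E" and "\<eta> \<subseteq> E" and x: "\<forall>e\<in>E. 0 \<le> x e \<and> x e \<le> 1"
  shows "measure_pmf.prob (perc E x) {b. \<eta> \<subseteq> b} = (\<Prod>e\<in>\<eta>. x e)"
proof -
  let ?Pi = "Pi_pmf E False (\<lambda>e. bernoulli_pmf (x e))"
  let ?S = "(\<lambda>b. {e\<in>E. b e}) -` {b. \<eta> \<subseteq> b}"
  define B where "B = (\<lambda>e. if e\<in>\<eta> then {True} else UNIV)"
  have sub: "set_pmf ?Pi \<subseteq> {f. \<forall>y. y \<notin> E \<longrightarrow> f y = False}" by (rule set_Pi_pmf_subset[OF fin])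
  have "?S \<inter> set_pmf ?Pi = PiE_dflt E False B \<inter> set_pmf ?Pi"
    using sub assms unfolding PiE_dflt_def B_def by auto
  then have "measure_pmf.prob (perc E x) {b. \<eta> \<subseteq> b} = measure_pmf.prob ?Pi (PiE_dflt E False B)"
    unfolding perc_def by (simp add: measure_Int_set_pmf) (metis measure_Int_set_pmf)
  also have "\<dots> = (\<Prod>e\<in>E. measure_pmf.prob (bernoulli_pmf (x e)) (B e))"
    by (rule measure_Pi_pmf_PiE_dflt[OF fin])
  also have "\<dots> = (\<Prod>e\<in>E. if e \<in> \<eta> then x e else 1)"
    by (intro prod.cong refl) (auto simp: B_def measure_pmf_single x)
  also have "\<dots> = (\<Prod>e\<in>\<eta>. x e)"
    using assms by (simp add: prod.If_cases Int_absorb1)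
  finally show ?thesis .
qed

lemma Qf_key:
  assumes fin: "finite E" and eta: "\<eta> \<subseteq> E"
  shows "(\<Prod>e\<in>\<eta>. x e) * Qf E x \<eta> \<omega> = (if \<eta> \<subseteq> \<omega> then Qf E x {} \<omega> else 0)"
proof (cases "\<omega> \<subseteq> E")
  case False then show ?thesis by (simp add: Qf_def)
next
  case True
  define g where "g = (\<lambda>e. if e \<in> \<omega> then x e else 1 - x e)"
  have Q1: "Qf E x \<eta> \<omega> = (\<Prod>e\<in>\<eta>. if e \<in> \<omega> then 1 else 0) * (\<Prod>e\<in>E - \<eta>. g e)"
    unfolding Qf_def g_def using True fin eta
    by (simp add: prod.If_cases Int_absorb1 Diff_eq)
  have Q0: "Qf E x {} \<omega> = (\<Prod>e\<in>\<eta>. g e) * (\<Prod>e\<in>E - \<eta>. g e)"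
    unfolding Qf_def g_def using True fin eta
    by (simp add: prod.subset_diff[of \<eta> E])
  show ?thesis
  proof (cases "\<eta> \<subseteq> \<omega>")
    case True
    then have "(\<Prod>e\<in>\<eta>. g e) = (\<Prod>e\<in>\<eta>. x e)" "(\<Prod>e\<in>\<eta>. if e \<in> \<omega> then 1 else (0::real)) = 1"
      by (auto simp: g_def intro!: prod.cong prod.neutral)
    then show ?thesis using Q1 Q0 True by simp
  next
    case False
    then obtain e where "e \<in> \<eta>" "e \<notin> \<omega>" by auto
    then have "(\<Prod>e\<in>\<eta>. if e \<in> \<omega> then 1 else (0::real)) = 0"
      using fin eta by (intro prod_zero) (auto intro: finite_subset)
    then show ?thesis using Q1 False by simp
  qed
qed


lemma snd_single:
  assumes "set_pmf C \<subseteq> {p. fst p = \<omega>}"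
  shows "pmf (map_pmf snd C) \<eta> = pmf C (\<omega>, \<eta>)"
proof -
  have "pmf (map_pmf snd C) \<eta> = measure_pmf.prob C (snd -` {\<eta>} \<inter> set_pmf C)"
    by (simp add: pmf_map measure_Int_set_pmf)
  also have "snd -` {\<eta>} \<inter> set_pmf C = {(\<omega>, \<eta>)} \<inter> set_pmf C" using assms by auto
  also have "measure_pmf.prob C \<dots> = pmf C (\<omega>, \<eta>)" by (simp add: measure_Int_set_pmf measure_pmf_single)
  finally show ?thesis .
qed

lemma fst_single:
  assumes "set_pmf C \<subseteq> {p. snd p = \<eta>}"
  shows "pmf (map_pmf fst C) \<omega> = pmf C (\<omega>, \<eta>)"
proof -
  have "pmf (map_pmf fst C) \<omega> = measure_pmf.prob C (fst -` {\<omega>} \<inter> set_pmf C)"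
    by (simp add: pmf_map measure_Int_set_pmf)
  also have "fst -` {\<omega>} \<inter> set_pmf C = {(\<omega>, \<eta>)} \<inter> set_pmf C" using assms by auto
  also have "measure_pmf.prob C \<dots> = pmf C (\<omega>, \<eta>)" by (simp add: measure_Int_set_pmf measure_pmf_single)
  finally show ?thesis .
qed

theorem corollary3p2:
  fixes E :: "'e set" and x :: "'e \<Rightarrow> real" and \<Sigma> :: "'e set set"
  assumes "finite E"
    and "\<forall>e\<in>E. 0 < x e \<and> x e < 1"
    and "\<Sigma> \<subseteq> Pow E" and "\<Sigma> \<noteq> {}"
  defines "P \<equiv> joint E x \<Sigma>"
  shows "(\<exists>c>0. \<forall>\<eta>. pmf (map_pmf snd P) \<eta> = (if \<eta> \<in> \<Sigma> then c * (\<Prod>e\<in>\<eta>. x e) else 0))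
       \<and> (\<forall>\<omega>. pmf (map_pmf fst P) \<omega> \<noteq> 0 \<longrightarrow>
            map_pmf snd (cond_pmf P {p. fst p = \<omega>}) = pmf_of_set (down \<Sigma> \<omega>))
       \<and> map_pmf fst P = union_pmf (map_pmf snd P) (perc E x)
       \<and> (\<forall>\<eta>\<in>\<Sigma>. pmf (map_pmf snd P) \<eta> \<noteq> 0 \<longrightarrow>
            map_pmf fst (cond_pmf P {p. snd p = \<eta>}) = union_pmf (perc E x) (return_pmf \<eta>))"
proof -
  note fin = assms(1)
  have x01: "\<forall>e\<in>E. 0 \<le> x e \<and> x e \<le> 1" using assms(2) by auto
  have finS: "finite \<Sigma>" using assms(3) fin by (meson finite_Pow_iff finite_subset)
  define S where "S = pair_pmf (perc E x) (pmf_of_set \<Sigma>)"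
  define A where "A = {(\<omega>, \<eta>). \<eta> \<in> down \<Sigma> \<omega>}"
  have P: "P = cond_pmf S A" unfolding P_def joint_def S_def A_def by simp
  obtain \<eta>0 where \<eta>0: "\<eta>0 \<in> \<Sigma>" using assms(4) by auto
  have QE: "Qf E x {} E = (\<Prod>e\<in>E. x e)" unfolding Qf_def by simp
  have QEpos: "Qf E x {} E > 0" unfolding QE using assms(2) by (intro prod_pos) auto
  have "E \<in> set_pmf (perc E x)" using QEpos perc_pmf[OF fin x01, of E] by (simp add: set_pmf_iff)
  then have "(E, \<eta>0) \<in> set_pmf S \<inter> A" unfolding S_def A_def down_def
    using \<eta>0 finS assms(3,4) by auto
  then have ne: "set_pmf S \<inter> A \<noteq> {}" by blast
  define Z where "Z = measure_pmf.prob S A"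
  have Zpos: "Z > 0" unfolding Z_def using measure_measure_pmf_not_zero[OF ne]
    by (simp add: order_less_le)
  define c where "c = 1 / (card \<Sigma> * Z)"
  have cpos: "c > 0" unfolding c_def using Zpos finS assms(4) by (simp add: card_gt_0_iff)
  have pmfP: "pmf P (\<omega>, \<eta>) = (if \<eta> \<in> \<Sigma> \<and> \<eta> \<subseteq> \<omega> then Qf E x {} \<omega> * c else 0)" for \<omega> \<eta>
  proof -
    have "pmf P (\<omega>, \<eta>) = (if (\<omega>, \<eta>) \<in> A then pmf S (\<omega>, \<eta>) / Z else 0)"
      unfolding P Z_def by (rule pmf_cond[OF ne])
    then show ?thesis
      by (simp add: A_def S_def down_def pmf_pair perc_pmf[OF fin x01] c_def pmf_of_set[OF assms(4) finS])
  qed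
  have setP0: "set_pmf P = set_pmf S \<inter> A" unfolding P by (rule set_cond_pmf[OF ne])
  have setP: "set_pmf P \<subseteq> Pow E \<times> \<Sigma>"
    unfolding setP0 S_def A_def down_def using set_perc[OF fin, of x] finS by auto
  have finPS: "finite (Pow E \<times> \<Sigma>)" using fin finS by simp
  have fstP: "pmf (map_pmf fst P) \<omega> = card (down \<Sigma> \<omega>) * Qf E x {} \<omega> * c" for \<omega>
  proof -
    have "pmf (map_pmf fst P) \<omega> = sum (pmf P) (fst -` {\<omega>} \<inter> (Pow E \<times> \<Sigma>))"
      by (simp add: pmf_map prob_finite_supp[OF setP finPS])
    also have "\<dots> = card (down \<Sigma> \<omega>) * Qf E x {} \<omega> * c"
    proof (cases "\<omega> \<subseteq> E")
      case True
      then have "fst -` {\<omega>} \<inter> (Pow E \<times> \<Sigma>) = Pair \<omega> ` \<Sigma>" by auto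
      then have "sum (pmf P) (fst -` {\<omega>} \<inter> (Pow E \<times> \<Sigma>)) = (\<Sum>\<eta>\<in>\<Sigma>. pmf P (\<omega>, \<eta>))"
        by (simp add: sum.reindex inj_on_def)
      also have "\<dots> = (\<Sum>\<eta>\<in>\<Sigma>. if \<eta> \<subseteq> \<omega> then Qf E x {} \<omega> * c else 0)"
        by (intro sum.cong refl) (simp add: pmfP)
      also have "\<dots> = (\<Sum>\<eta>\<in>down \<Sigma> \<omega>. Qf E x {} \<omega> * c)"
        unfolding down_def by (rule sum.inter_filter[OF finS, symmetric])
      finally show ?thesis by simp
    next
      case False
      then have "fst -` {\<omega>} \<inter> (Pow E \<times> \<Sigma>) = {}" by auto
      then show ?thesis using False by (simp add: Qf_def)
    qed
    finally show ?thesis .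
  qed
  have sndP: "pmf (map_pmf snd P) \<eta> = (if \<eta> \<in> \<Sigma> then c * (\<Prod>e\<in>\<eta>. x e) else 0)" for \<eta>
  proof -
    have "pmf (map_pmf snd P) \<eta> = sum (pmf P) (snd -` {\<eta>} \<inter> (Pow E \<times> \<Sigma>))"
      by (simp add: pmf_map prob_finite_supp[OF setP finPS])
    also have "\<dots> = (if \<eta> \<in> \<Sigma> then c * (\<Prod>e\<in>\<eta>. x e) else 0)"
    proof (cases "\<eta> \<in> \<Sigma>")
      case True
      then have "snd -` {\<eta>} \<inter> (Pow E \<times> \<Sigma>) = (\<lambda>\<omega>. (\<omega>, \<eta>)) ` Pow E" by auto
      then have "sum (pmf P) (snd -` {\<eta>} \<inter> (Pow E \<times> \<Sigma>)) = (\<Sum>\<omega>\<in>Pow E. pmf P (\<omega>, \<eta>))"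
        by (simp add: sum.reindex inj_on_def)
      also have "\<dots> = (\<Sum>\<omega>\<in>Pow E. if \<eta> \<subseteq> \<omega> then Qf E x {} \<omega> * c else 0)"
        by (intro sum.cong refl) (simp add: pmfP True)
      also have "\<dots> = c * (\<Sum>\<omega>\<in>{b. \<eta> \<subseteq> b} \<inter> Pow E. Qf E x {} \<omega>)"
        using fin by (simp add: sum.inter_filter[symmetric] sum_distrib_left mult.commute Int_def conj_commute)
      also have "(\<Sum>\<omega>\<in>{b. \<eta> \<subseteq> b} \<inter> Pow E. Qf E x {} \<omega>) = measure_pmf.prob (perc E x) {b. \<eta> \<subseteq> b}"
        by (simp add: prob_finite_supp[OF set_perc[OF fin] finite_Pow_iff[THEN iffD2, OF fin]] perc_pmf[OF fin x01])
      also have "\<dots> = (\<Prod>e\<in>\<eta>. x e)" using perc_up[OF fin _ x01] True assms(3) by auto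
      finally show ?thesis using True by simp
    next
      case False
      then have "snd -` {\<eta>} \<inter> (Pow E \<times> \<Sigma>) = {}" by auto
      then show ?thesis using False by simp
    qed
    finally show ?thesis .
  qed
  have part2: "map_pmf snd (cond_pmf P {p. fst p = \<omega>}) = pmf_of_set (down \<Sigma> \<omega>)"
    if nz: "pmf (map_pmf fst P) \<omega> \<noteq> 0" for \<omega>
  proof -
    have "\<omega> \<in> set_pmf (map_pmf fst P)" using nz by (simp add: set_pmf_iff del: set_map_pmf)
    then have neC: "set_pmf P \<inter> {p. fst p = \<omega>} \<noteq> {}" by auto
    have cd: "card (down \<Sigma> \<omega>) \<noteq> 0" and Qn: "Qf E x {} \<omega> \<noteq> 0" using nz fstP[of \<omega>] by auto
    then have dne: "down \<Sigma> \<omega> \<noteq> {}" "finite (down \<Sigma> \<omega>)" by (auto intro: card_ge_0_finite)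
    have mfst: "measure_pmf.prob P {p. fst p = \<omega>} = pmf (map_pmf fst P) \<omega>"
      by (simp add: pmf_map vimage_def)
    show ?thesis
    proof (rule pmf_eqI)
      fix \<eta>
      have "pmf (map_pmf snd (cond_pmf P {p. fst p = \<omega>})) \<eta> = pmf (cond_pmf P {p. fst p = \<omega>}) (\<omega>, \<eta>)"
        by (rule snd_single) (simp add: set_cond_pmf[OF neC])
      also have "\<dots> = pmf P (\<omega>, \<eta>) / pmf (map_pmf fst P) \<omega>"
        by (simp add: pmf_cond[OF neC] mfst)
      also have "\<dots> = pmf (pmf_of_set (down \<Sigma> \<omega>)) \<eta>"
        using cd Qn cpos by (simp add: pmfP fstP pmf_of_set[OF dne(1,2)[unfolded down_def]] down_def)
      finally show "pmf (map_pmf snd (cond_pmf P {p. fst p = \<omega>})) \<eta> = pmf (pmf_of_set (down \<Sigma> \<omega>)) \<eta>" .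
    qed
  qed
  have part3: "map_pmf fst P = union_pmf (map_pmf snd P) (perc E x)"
  proof (rule pmf_eqI)
    fix \<omega>
    have setS: "set_pmf (map_pmf snd P) \<subseteq> \<Sigma>" using setP by auto
    have "pmf (union_pmf (map_pmf snd P) (perc E x)) \<omega>
        = (\<Sum>a\<in>\<Sigma>. pmf (map_pmf snd P) a *\<^sub>R pmf (map_pmf (\<lambda>b. a \<union> b) (perc E x)) \<omega>)"
      unfolding union_pmf_def map_pair_bind pmf_bind case_prod_conv
      by (rule integral_measure_pmf[OF finS]) (use setS in auto)
    also have "\<dots> = (\<Sum>a\<in>\<Sigma>. c * ((\<Prod>e\<in>a. x e) * Qf E x a \<omega>))"
    proof (intro sum.cong refl)
      fix a assume a: "a \<in> \<Sigma>"
      have "pmf (map_pmf (\<lambda>b. a \<union> b) (perc E x)) \<omega> = measure_pmf.prob (perc E x) {b. b \<union> a = \<omega>}"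
        by (simp add: pmf_map vimage_def Un_commute)
      also have "\<dots> = Qf E x a \<omega>" using perc_event[OF fin _ x01] a assms(3) by auto
      finally show "pmf (map_pmf snd P) a *\<^sub>R pmf (map_pmf (\<lambda>b. a \<union> b) (perc E x)) \<omega>
          = c * ((\<Prod>e\<in>a. x e) * Qf E x a \<omega>)" using a by (simp add: sndP)
    qed
    also have "\<dots> = (\<Sum>a\<in>\<Sigma>. if a \<subseteq> \<omega> then c * Qf E x {} \<omega> else 0)"
    proof (intro sum.cong refl)
      fix a assume "a \<in> \<Sigma>"
      then have "a \<subseteq> E" using assms(3) by auto
      from Qf_key[OF fin this, of x \<omega>]
      show "c * ((\<Prod>e\<in>a. x e) * Qf E x a \<omega>) = (if a \<subseteq> \<omega> then c * Qf E x {} \<omega> else 0)"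
        by simp
    qed
    also have "\<dots> = (\<Sum>a\<in>down \<Sigma> \<omega>. c * Qf E x {} \<omega>)"
      unfolding down_def by (rule sum.inter_filter[OF finS, symmetric])
    also have "\<dots> = pmf (map_pmf fst P) \<omega>" by (simp add: fstP)
    finally show "pmf (map_pmf fst P) \<omega> = pmf (union_pmf (map_pmf snd P) (perc E x)) \<omega>" by simp
  qed
  have part4: "map_pmf fst (cond_pmf P {p. snd p = \<eta>}) = union_pmf (perc E x) (return_pmf \<eta>)"
    if \<eta>: "\<eta> \<in> \<Sigma>" and nz: "pmf (map_pmf snd P) \<eta> \<noteq> 0" for \<eta>
  proof -
    have "\<eta> \<in> set_pmf (map_pmf snd P)" using nz by (simp add: set_pmf_iff del: set_map_pmf)
    then have neC: "set_pmf P \<inter> {p. snd p = \<eta>} \<noteq> {}" by auto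
    have msnd: "measure_pmf.prob P {p. snd p = \<eta>} = pmf (map_pmf snd P) \<eta>"
      by (simp add: pmf_map vimage_def)
    have \<eta>E: "\<eta> \<subseteq> E" using \<eta> assms(3) by auto
    have prpos: "(\<Prod>e\<in>\<eta>. x e) > 0" using assms(2) \<eta>E by (intro prod_pos) auto
    have U: "union_pmf (perc E x) (return_pmf \<eta>) = map_pmf (\<lambda>a. a \<union> \<eta>) (perc E x)"
      unfolding union_pmf_def map_pair_bind by (simp add: map_pmf_def bind_return_pmf)
    show ?thesis
    proof (rule pmf_eqI)
      fix \<omega>
      have "pmf (map_pmf fst (cond_pmf P {p. snd p = \<eta>})) \<omega> = pmf (cond_pmf P {p. snd p = \<eta>}) (\<omega>, \<eta>)"
        by (rule fst_single) (simp add: set_cond_pmf[OF neC])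
      also have "\<dots> = pmf P (\<omega>, \<eta>) / pmf (map_pmf snd P) \<eta>"
        by (simp add: pmf_cond[OF neC] msnd)
      also have "\<dots> = (if \<eta> \<subseteq> \<omega> then Qf E x {} \<omega> else 0) / (\<Prod>e\<in>\<eta>. x e)"
        using cpos \<eta> by (simp add: pmfP sndP)
      also have "\<dots> = Qf E x \<eta> \<omega>"
        using Qf_key[OF fin \<eta>E, of x \<omega>, symmetric] prpos by (simp add: field_simps)
      also have "\<dots> = pmf (union_pmf (perc E x) (return_pmf \<eta>)) \<omega>"
        unfolding U using perc_event[OF fin \<eta>E x01] by (simp add: pmf_map vimage_def)
      finally show "pmf (map_pmf fst (cond_pmf P {p. snd p = \<eta>})) \<omega>
          = pmf (union_pmf (perc E x) (return_pmf \<eta>)) \<omega>" .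
    qed
  qed
  show ?thesis using cpos sndP part2 part3 part4 by blast
qed

end
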